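(* If a Lindelöf $P$-space $X$ is homeomorphic to a subspace of a separable Hausdorff space, then $w(X)\leq\mathfrak c$.
   Context: A space is a $P$-space if every $G_\delta$-subset is open. $w$ weight, $\mathfrak c=2^\omega$. *)

theory Defs
  imports "HOL-Analysis.Analysis" "HOL-Library.Equipollence"
begin

definition P_space :: "'a topology \<Rightarrow> bool" where
  "P_space X \<equiv> \<forall>S. gdelta_in X S \<longrightarrow> openin X S"

definition base_of :: "'a topology \<Rightarrow> 'a set set \<Rightarrow> bool" where
  "base_of X \<B> \<equiv> (\<forall>V \<in> \<B>. openin X V) \<and>
     (\<forall>U x. openin X U \<and> x \<in> U \<longrightarrow> (\<exists>V \<in> \<B>. x \<in> V \<and> V \<subseteq> U))"

definition weight_le_continuum :: "'a topology \<Rightarrow> bool" where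
  "weight_le_continuum X \<equiv> \<exists>\<B>. base_of X \<B> \<and> \<B> \<lesssim> (UNIV :: real set)"

end

theory Submission
  imports Defs
begin

lemma W_super:
  assumes "openin Y U"
  shows "U \<subseteq> topspace Y - Y closure_of (D - U \<inter> D)"
proof
  fix p assume p: "p \<in> U"
  have "p \<in> topspace Y" using assms p openin_subset by blast
  moreover have "p \<notin> Y closure_of (D - U \<inter> D)"
    using p assms by (auto simp: in_closure_of)
  ultimately show "p \<in> topspace Y - Y closure_of (D - U \<inter> D)" by blast
qed

lemma W_disj:
  assumes dense: "Y closure_of D = topspace Y" and "A \<inter> B = {}"
  shows "(topspace Y - Y closure_of (D - A)) \<inter> (topspace Y - Y closure_of (D - B)) = {}"
proof (rule ccontr)
  let ?T = "(topspace Y - Y closure_of (D - A)) \<inter> (topspace Y - Y closure_of (D - B))"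
  assume "?T \<noteq> {}"
  then obtain p where p: "p \<in> ?T" by blast
  have op: "openin Y ?T" by (intro openin_Int openin_diff) auto
  have "p \<in> topspace Y" using p by (elim IntE DiffE)
  then have "p \<in> Y closure_of D" using dense by (simp only:)
  then have "\<forall>T. p \<in> T \<and> openin Y T \<longrightarrow> (\<exists>y. y \<in> D \<and> y \<in> T)" unfolding in_closure_of by (elim conjE)
  then have "\<exists>y. y \<in> D \<and> y \<in> ?T" using p op by (elim allE[of _ ?T] impE) (rule conjI)
  then obtain d where d: "d \<in> D" "d \<in> ?T" by blast
  have "d \<in> A"
  proof (rule ccontr)
    assume "d \<notin> A"
    then have "d \<in> D - A" using d by blast
    then have "d \<in> Y closure_of (D - A)"
      using d closure_of_subset[of "D - A" Y] by (metis Diff_iff IntE in_closure_of)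
    then show False using d by blast
  qed
  moreover have "d \<in> B"
  proof (rule ccontr)
    assume "d \<notin> B"
    then have "d \<in> D - B" using d by blast
    then have "d \<in> Y closure_of (D - B)"
      using d by (metis Diff_iff IntE in_closure_of)
    then show False using d by blast
  qed
  ultimately show False using assms by blast
qed

lemma main:
  fixes X :: "'a topology" and Y :: "'b topology" and f :: "'a \<Rightarrow> 'b"
  assumes lin: "Lindelof_space X" and P: "P_space X"
    and H: "Hausdorff_space Y" and cD: "countable D" and DY: "D \<subseteq> topspace Y"
    and dense: "Y closure_of D = topspace Y"
    and f: "continuous_map X Y f" and inj: "inj_on f (topspace X)"
  shows "weight_le_continuum X"
proof -
  define W where "W A = topspace Y - Y closure_of (D - A)" for A
  define Op where "Op A = {x \<in> topspace X. f x \<in> W A}" for A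
  define hM where "hM M n = {d \<in> D. prod_encode (n, to_nat_on D d) \<in> M}" for M n
  define BB where "BB h = topspace X \<inter> (\<Inter>n. Op (h n))" for h :: "nat \<Rightarrow> 'b set"
  define \<B> where "\<B> = (\<lambda>M. BB (hM M)) ` (UNIV :: nat set set)"
  have openOp: "openin X (Op A)" for A
    unfolding Op_def W_def
    by (intro openin_continuous_map_preimage[OF f] openin_diff) auto
  have openBB: "openin X (BB h)" for h
  proof -
    have eq: "BB h = \<Inter> (range (\<lambda>n. topspace X \<inter> Op (h n)))"
      unfolding BB_def by auto
    have "gdelta_in X (BB h)"
      unfolding eq
      by (intro gdelta_in_Inter) (auto intro!: open_imp_gdelta_in openin_Int openOp)
    then show ?thesis using P unfolding P_space_def by blast
  qed
  have repr: "BB h \<in> \<B>" if h: "\<And>n. h n \<subseteq> D" for h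
  proof -
    define M where "M = {prod_encode (n, to_nat_on D d) | n d. d \<in> h n}"
    have "hM M = h"
    proof (rule ext)
      fix n
      show "hM M n = h n"
      proof
        show "hM M n \<subseteq> h n"
        proof
          fix d assume "d \<in> hM M n"
          then obtain n' d' where "d \<in> D" "d' \<in> h n'" "prod_encode (n, to_nat_on D d) = prod_encode (n', to_nat_on D d')"
            unfolding hM_def M_def by blast
          moreover have "inj_on (to_nat_on D) D" using cD by (simp add: inj_on_to_nat_on)
          ultimately have "n = n'" "to_nat_on D d = to_nat_on D d'" by (auto simp: prod_encode_eq)
          moreover have "d' \<in> D" using h \<open>d' \<in> h n'\<close> by blast
          ultimately have "d = d'" "n = n'" using \<open>d \<in> D\<close> \<open>inj_on (to_nat_on D) D\<close> by (auto simp: inj_on_def)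
          then show "d \<in> h n" using \<open>d' \<in> h n'\<close> by simp
        qed
        show "h n \<subseteq> hM M n" using h unfolding hM_def M_def by blast
      qed
    qed
    then show ?thesis unfolding \<B>_def by blast
  qed
  have base: "base_of X \<B>"
    unfolding base_of_def
  proof (intro conjI allI impI ballI)
    show "openin X V" if "V \<in> \<B>" for V using that openBB unfolding \<B>_def by blast
  next
    fix G x assume Gx: "openin X G \<and> x \<in> G"
    then have xX: "x \<in> topspace X" using openin_subset by blast
    define C where "C = topspace X - G"
    have clC: "closedin X C" unfolding C_def using Gx by blast
    have "\<forall>z\<in>C. \<exists>UV. openin Y (fst UV) \<and> openin Y (snd UV) \<and> f x \<in> fst UV \<and> f z \<in> snd UV \<and> disjnt (fst UV) (snd UV)"
    proof
      fix z assume z: "z \<in> C"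
      then have "z \<noteq> x" "z \<in> topspace X" using Gx C_def by auto
      then have "f z \<noteq> f x" using inj xX by (metis inj_on_def)
      moreover have "f z \<in> topspace Y" "f x \<in> topspace Y"
        using continuous_map_image_subset_topspace[OF f] \<open>z \<in> topspace X\<close> xX by blast+
      ultimately show "\<exists>UV. openin Y (fst UV) \<and> openin Y (snd UV) \<and> f x \<in> fst UV \<and> f z \<in> snd UV \<and> disjnt (fst UV) (snd UV)"
      proof -
        obtain U0 V0 where "openin Y U0" "openin Y V0" "f x \<in> U0" "f z \<in> V0" "disjnt U0 V0"
          using H \<open>f z \<noteq> f x\<close> \<open>f z \<in> topspace Y\<close> \<open>f x \<in> topspace Y\<close> unfolding Hausdorff_space_def by metis
        then show ?thesis by (intro exI[of _ "(U0, V0)"]) simp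
      qed
    qed
    then obtain UV where UV: "\<And>z. z \<in> C \<Longrightarrow> openin Y (fst (UV z)) \<and> openin Y (snd (UV z)) \<and> f x \<in> fst (UV z) \<and> f z \<in> snd (UV z) \<and> disjnt (fst (UV z)) (snd (UV z))"
      by (metis (no_types, lifting) bchoice)
    define U where "U z = fst (UV z)" for z
    define V where "V z = snd (UV z)" for z
    have Lsub: "Lindelof_space (subtopology X C)" using lin clC by (rule Lindelof_space_closedin_subtopology)
    have CX: "C \<subseteq> topspace X" using C_def by blast
    have LC0: "\<forall>\<U>. (\<forall>U\<in>\<U>. openin X U) \<and> C \<subseteq> \<Union>\<U> \<longrightarrow> (\<exists>V. countable V \<and> V \<subseteq> \<U> \<and> C \<subseteq> \<Union>V)"
      using Lindelof_space_subtopology_subset[OF CX] Lsub by (simp only:)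
    have LC: "\<exists>V. countable V \<and> V \<subseteq> \<U> \<and> C \<subseteq> \<Union>V" if "(\<forall>U\<in>\<U>. openin X U) \<and> C \<subseteq> \<Union>\<U>" for \<U>
      using LC0 that by (elim allE impE) auto
    have cov: "C \<subseteq> \<Union> ((\<lambda>z. Op (V z \<inter> D)) ` C)"
    proof
      fix z assume z: "z \<in> C"
      have "openin Y (V z)" "f z \<in> V z" using UV[OF z] V_def by auto
      then have "f z \<in> W (V z \<inter> D)" unfolding W_def using W_super[of Y "V z" D] by blast
      then show "z \<in> \<Union> ((\<lambda>z. Op (V z \<inter> D)) ` C)" using z CX unfolding Op_def by blast
    qed
    obtain \<V> where V1: "countable \<V>" "\<V> \<subseteq> (\<lambda>z. Op (V z \<inter> D)) ` C" "C \<subseteq> \<Union>\<V>"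
    proof -
      have "(\<forall>U\<in>(\<lambda>z. Op (V z \<inter> D)) ` C. openin X U) \<and> C \<subseteq> \<Union> ((\<lambda>z. Op (V z \<inter> D)) ` C)"
        using cov openOp by blast
      from LC[OF this] show ?thesis using that by blast
    qed
    then obtain C' where C': "C' \<subseteq> C" "countable C'" "\<V> = (\<lambda>z. Op (V z \<inter> D)) ` C'"
      by (meson countable_subset_image)
    define h where "h n = (if C' = {} then D else U (from_nat_into C' n) \<inter> D)" for n
    have hD: "h n \<subseteq> D" for n unfolding h_def by auto
    have fxW: "f x \<in> W (h n)" for n
    proof (cases "C' = {}")
      case True
      have "f x \<in> topspace Y" using continuous_map_image_subset_topspace[OF f] xX by blast
      moreover have "h n = D" using True unfolding h_def by (rule if_P)
      moreover have "W D = topspace Y" unfolding W_def by (simp only: Diff_cancel closure_of_empty Diff_empty)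
      ultimately show ?thesis by (simp only:)
    next
      case False
      have zC0: "from_nat_into C' n \<in> C" by (rule subsetD[OF C'(1) from_nat_into[OF False]])
      have "openin Y (U (from_nat_into C' n))" "f x \<in> U (from_nat_into C' n)" using UV[OF zC0] unfolding U_def by simp_all
      then have "f x \<in> W (U (from_nat_into C' n) \<inter> D)" unfolding W_def using W_super[of Y "U (from_nat_into C' n)" D] by blast
      then show ?thesis unfolding h_def using False by simp
    qed
    have xB: "x \<in> BB h" unfolding BB_def Op_def using xX fxW by blast
    have BG: "BB h \<subseteq> G"
    proof
      fix y assume y: "y \<in> BB h"
      show "y \<in> G"
      proof (rule ccontr)
        assume "y \<notin> G"
        then have "y \<in> C" using y C_def BB_def by blast
        then obtain z where z: "z \<in> C'" "y \<in> Op (V z \<inter> D)" using V1 C' by blast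
        then have ne: "C' \<noteq> {}" by blast
        obtain n where n: "from_nat_into C' n = z" using from_nat_into_surj[OF C'(2) z(1)] by blast
        have zC: "z \<in> C" using z C' by blast
        have "f y \<in> W (h n)" using y unfolding BB_def Op_def by blast
        then have a: "f y \<in> W (U z \<inter> D)" using ne n unfolding h_def by simp
        have b: "f y \<in> W (V z \<inter> D)" using z unfolding Op_def by blast
        have "(U z \<inter> D) \<inter> (V z \<inter> D) = {}" using UV[OF zC] U_def V_def by (auto simp: disjnt_def)
        then have "W (U z \<inter> D) \<inter> W (V z \<inter> D) = {}"
          unfolding W_def by (rule W_disj[OF dense])
        then show False using a b by blast
      qed
    qed
    show "\<exists>V\<in>\<B>. x \<in> V \<and> V \<subseteq> G" proof (rule bexI[of _ "BB h"])
      show "BB h \<in> \<B>" by (rule repr) (rule hD)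
    qed (rule conjI[OF xB BG])
  qed
  have "\<B> \<lesssim> (UNIV :: nat set set)" unfolding \<B>_def by (rule image_lepoll)
  then have "\<B> \<lesssim> (UNIV :: real set)"
    by (rule lepoll_trans[OF _ eqpoll_imp_lepoll[OF nat_sets_eqpoll_reals]])
  then show ?thesis unfolding weight_le_continuum_def using base by (intro exI[of _ \<B>] conjI)
qed

theorem theorem5:
  fixes X :: "'a topology" and Y :: "'b topology" and S :: "'b set"
  assumes "Lindelof_space X" and "P_space X"
    and "Hausdorff_space Y" and "separable_space Y"
    and "X homeomorphic_space subtopology Y S"
  shows "weight_le_continuum X"
proof -
  obtain f g where fg: "homeomorphic_maps X (subtopology Y S) f g"
    using assms(5) unfolding homeomorphic_space_def by blast
  then have f: "continuous_map X Y f"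
    using fg unfolding homeomorphic_maps_def continuous_map_in_subtopology by (elim conjE)
  have inj: "inj_on f (topspace X)"
  proof (rule inj_onI)
    fix x y assume "x \<in> topspace X" "y \<in> topspace X" "f x = f y"
    moreover have "\<forall>x \<in> topspace X. g (f x) = x" using fg unfolding homeomorphic_maps_def by (elim conjE)
    ultimately show "x = y" by metis
  qed
  obtain D where D: "countable D" "D \<subseteq> topspace Y" "Y closure_of D = topspace Y"
    using assms(4) unfolding separable_space_def by blast
  show ?thesis using main[OF assms(1,2,3) D f inj] .
qed

end
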